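(* Let $\mu>0$, $D\ge1$, and let $(V,T)$ be a Galton–Watson tree with root $v_o$ and Poisson$(\mu)$ offspring distribution, truncated at depth $D$; let $V_d$ be the set of nodes at depth $d$ and $\xi_d=|V_d|$. Let $\rho_1,\dots,\rho_D\in[0,1]$ with $\rho_1=1$. Colors are assigned as follows: the root has a color; each node at depth $d\in\{1,\dots,D\}$ performs an independent Bernoulli$(\rho_d)$ trial, and on success starts a new color (not used before), while on failure it adopts its parent's color. Then: (a) If $\zeta_d$ denotes the number of new colors created at depth $d$, then conditionally on $\xi_d=m$, $\zeta_d$ has the Binomial$(m,\rho_d)$ distribution. (b) If color $c$ is created at a node $u$ at depth $d$, then the set of nodes of color $c$ forms a subtree $(V_c,T_c)$ rooted at $u$, of depth at most $D-d$, which is a branching tree in which each color-$c$ node at depth $d+k-1$ ($1\le k\le D-d$) has a Poisson$(\mu(1-\rho_{d+k}))$ number of color-$c$ children; the random subtrees $(T_c)$ for different colors are independent. (c) Each color created at a depth $d<D$ has on average \[ \nu_d:=\mu^{D-d}\prod_{t=d+1}^{D}(1-\rho_t) \] leaves (nodes at depth $D$) of the same color descended from the node where it was created; in addition, $\zeta_D$ of the leaves carry colors newly created at depth $D$, each such color having exactly $\nu_D:=1$ instance.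
   Context: Truncated at depth $D$ means only generations $0,\dots,D$ are kept; nodes at depth $D$ are called leaves. *)

theory Defs
  imports "HOL-Probability.Probability"
begin

text \<open>Poisson law with rate r \<ge> 0, where rate 0 is the point mass at 0
  (the library's poisson_pmf is only specified for positive rate).\<close>
definition poisson0 :: "real \<Rightarrow> nat pmf" where
  "poisson0 r = (if r = 0 then return_pmf 0 else poisson_pmf r)"

text \<open>Colored trees: each node carries a flag saying whether a NEW colour is
  started at this node (True) or the parent's colour is adopted (False).
  The root carries True (its colour is "created" at the root, depth 0).\<close>
datatype ctree = CNode bool "ctree list"

datatype utree = UNode "utree list"

primrec cflag :: "ctree \<Rightarrow> bool" where
  "cflag (CNode b cs) = b"

text \<open>The coloured Galton--Watson process truncated at depth D.
  gen mu rho D h b is the law of the coloured subtree of a node at depth D - h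
  (h = remaining height) whose flag is b.\<close>
primrec gen :: "real \<Rightarrow> (nat \<Rightarrow> real) \<Rightarrow> nat \<Rightarrow> nat \<Rightarrow> bool \<Rightarrow> ctree pmf" where
  "gen mu rho D 0 b = return_pmf (CNode b [])"
| "gen mu rho D (Suc h) b =
     do { n \<leftarrow> poisson_pmf mu;
          cs \<leftarrow> replicate_pmf n (do { b' \<leftarrow> bernoulli_pmf (rho (D - h)); gen mu rho D h b' });
          return_pmf (CNode b cs) }"

definition colored_gw :: "real \<Rightarrow> (nat \<Rightarrow> real) \<Rightarrow> nat \<Rightarrow> ctree pmf" where
  "colored_gw mu rho D = gen mu rho D D True"

fun level :: "nat \<Rightarrow> ctree \<Rightarrow> ctree list" where
  "level 0 t = [t]"
| "level (Suc d) (CNode b cs) = concat (map (level d) cs)"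

definition xi :: "nat \<Rightarrow> ctree \<Rightarrow> nat" where
  "xi d t = length (level d t)"

definition zeta :: "nat \<Rightarrow> ctree \<Rightarrow> nat" where
  "zeta d t = length (filter cflag (level d t))"

text \<open>The colour class of a colour-creating node u: u together with all
  descendants reachable through nodes that adopt their parent's colour,
  i.e. exactly the nodes having u's colour; returned as a tree shape rooted at u.\<close>
fun color_shape :: "ctree \<Rightarrow> utree" where
  "color_shape (CNode b cs) = UNode (map color_shape (filter (\<lambda>c. \<not> cflag c) cs))"

fun cnodes :: "nat \<Rightarrow> ctree \<Rightarrow> (nat \<times> ctree) list" where
  "cnodes d (CNode b cs) =
     (if b then [(d, CNode b cs)] else []) @ concat (map (cnodes (Suc d)) cs)"

definition colors :: "ctree \<Rightarrow> (nat \<times> utree) list" where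
  "colors t = map (\<lambda>(d, u). (d, color_shape u)) (cnodes 0 t)"

fun uheight :: "utree \<Rightarrow> nat" where
  "uheight (UNode cs) = Max (insert 0 (set (map (\<lambda>c. Suc (uheight c)) cs)))"

fun ulevel :: "nat \<Rightarrow> utree \<Rightarrow> utree list" where
  "ulevel 0 t = [t]"
| "ulevel (Suc k) (UNode cs) = concat (map (ulevel k) cs)"

text \<open>Law of the branching tree of a colour created at depth D - h: a node at
  depth j < D has Poisson(mu (1 - rho (j+1))) children, truncated at depth D.\<close>
primrec color_law :: "real \<Rightarrow> (nat \<Rightarrow> real) \<Rightarrow> nat \<Rightarrow> nat \<Rightarrow> utree pmf" where
  "color_law mu rho D 0 = return_pmf (UNode [])"
| "color_law mu rho D (Suc h) =
     do { n \<leftarrow> poisson0 (mu * (1 - rho (D - h)));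
          cs \<leftarrow> replicate_pmf n (color_law mu rho D h);
          return_pmf (UNode cs) }"

end

theory Submission
  imports Defs
begin


lemma map_not_bernoulli:
  assumes "0 \<le> r" "r \<le> 1"
  shows "map_pmf Not (bernoulli_pmf r) = bernoulli_pmf (1 - r)"
proof (rule pmf_eqI)
  fix b
  have v1: "Not -` {True} = {False}" and v2: "Not -` {False} = {True}" by auto
  show "pmf (map_pmf Not (bernoulli_pmf r)) b = pmf (bernoulli_pmf (1 - r)) b"
    using assms by (cases b) (simp_all add: pmf_map v1 v2 measure_pmf_single)
qed

lemma binomial_pmf_zero: "binomial_pmf n 0 = return_pmf 0"
  by (rule pmf_eqI) (auto simp: indicator_def)

lemma poisson_binomial:
  assumes mu: "mu > 0" and q: "0 \<le> q" "q \<le> 1"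
  shows "bind_pmf (poisson_pmf mu) (\<lambda>n. binomial_pmf n q) = poisson0 (mu * q)"
proof (cases "q = 0")
  case True
  then show ?thesis by (simp add: poisson0_def binomial_pmf_zero bind_return_pmf')
next
  case False
  then have qp: "q > 0" using q by auto
  have mq: "mu * q > 0" using mu qp by simp
  show ?thesis
  proof (rule pmf_eqI)
    fix k
    define f where "f n = (mu ^ n / fact n * exp (- mu)) * ((n choose k) * q ^ k * (1 - q) ^ (n - k))" for n
    have f0: "f i = 0" if "i < k" for i using that by (simp add: f_def)
    have shift: "f (i + k) = (exp (-mu) * (mu*q)^k / fact k) * ((mu*(1-q))^i / fact i)" for i
    proof -
      have c: "real ((i + k) choose k) = fact (i+k) / (fact k * fact i)"
        by (simp add: binomial_fact)
      show ?thesis unfolding f_def c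
        by (simp add: power_add power_mult_distrib)
    qed
    have "(\<lambda>i. (exp (-mu) * (mu*q)^k / fact k) * ((mu*(1-q))^i / fact i)) sums
          ((exp (-mu) * (mu*q)^k / fact k) * exp (mu*(1-q)))"
      by (rule sums_mult) (use exp_converges[of "mu*(1-q)"] in \<open>simp add: divide_inverse mult.commute\<close>)
    then have fsh: "(\<lambda>i. f (i + k)) sums ((exp (-mu) * (mu*q)^k / fact k) * exp (mu*(1-q)))"
      by (simp add: shift)
    have fs: "f sums ((mu*q)^k / fact k * exp (-(mu*q)))"
    proof -
      have e: "exp (- mu) * (mu * q) ^ k / fact k * exp (mu * (1 - q)) = (mu*q)^k / fact k * exp (-(mu*q))"
        by (simp add: algebra_simps flip: exp_add)
      have "f sums (exp (- mu) * (mu * q) ^ k / fact k * exp (mu * (1 - q)))"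
        using fsh by (subst (asm) sums_zero_iff_shift[OF f0])
      then show ?thesis by (simp only: e)
    qed
    have fnn: "\<And>n. 0 \<le> f n" using mu q by (simp add: f_def)
    have "ennreal (pmf (bind_pmf (poisson_pmf mu) (\<lambda>n. binomial_pmf n q)) k)
        = (\<integral>\<^sup>+ n. ennreal (pmf (poisson_pmf mu) n) * ennreal (pmf (binomial_pmf n q) k) \<partial>count_space UNIV)"
      by (simp add: ennreal_pmf_bind nn_integral_measure_pmf)
    also have "\<dots> = (\<integral>\<^sup>+ n. ennreal (f n) \<partial>count_space UNIV)"
      using mu q by (intro nn_integral_cong) (simp add: f_def flip: ennreal_mult)
    also have "\<dots> = (\<Sum>n. ennreal (f n))" by (simp add: nn_integral_count_space_nat)
    also have "\<dots> = ennreal ((mu*q)^k / fact k * exp (-(mu*q)))"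
      using fs fnn by (intro sums_unique[symmetric]) (simp add: mq less_imp_le)
    also have "\<dots> = ennreal (pmf (poisson0 (mu * q)) k)"
      using mq mu qp by (simp add: poisson0_def)
    finally show "pmf (bind_pmf (poisson_pmf mu) (\<lambda>n. binomial_pmf n q)) k = pmf (poisson0 (mu * q)) k"
      by (simp add: mq less_imp_le)
  qed
qed

lemma list_thinning:
  assumes "0 \<le> q" "q \<le> 1"
  shows "map_pmf (\<lambda>xs. map snd (filter fst xs)) (replicate_pmf n (pair_pmf (bernoulli_pmf q) X))
       = bind_pmf (binomial_pmf n q) (\<lambda>m. replicate_pmf m X)"
proof (induction n)
  case 0
  then show ?case using assms by (simp add: binomial_pmf_0 bind_return_pmf)
next
  case (Suc n)
  have "map_pmf (\<lambda>xs. map snd (filter fst xs)) (replicate_pmf (Suc n) (pair_pmf (bernoulli_pmf q) X))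
      = do {b \<leftarrow> bernoulli_pmf q; x \<leftarrow> X;
            ys \<leftarrow> map_pmf (\<lambda>xs. map snd (filter fst xs)) (replicate_pmf n (pair_pmf (bernoulli_pmf q) X));
            return_pmf (if b then x # ys else ys)}"
    by (simp add: pair_pmf_def map_pmf_def bind_assoc_pmf bind_return_pmf) (intro bind_pmf_cong refl; simp)
  also have "\<dots> = do {b \<leftarrow> bernoulli_pmf q; x \<leftarrow> X; m \<leftarrow> binomial_pmf n q; ys \<leftarrow> replicate_pmf m X;
            return_pmf (if b then x # ys else ys)}"
    by (simp add: Suc bind_assoc_pmf)
  also have "\<dots> = do {b \<leftarrow> bernoulli_pmf q; m \<leftarrow> binomial_pmf n q; x \<leftarrow> X; ys \<leftarrow> replicate_pmf m X;
            return_pmf (if b then x # ys else ys)}"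
    by (subst bind_commute_pmf[where A=X]) simp
  also have "\<dots> = do {b \<leftarrow> bernoulli_pmf q; m \<leftarrow> binomial_pmf n q; replicate_pmf ((if b then 1 else 0) + m) X}"
    by (intro bind_pmf_cong refl) (auto simp: bind_return_pmf')
  also have "\<dots> = bind_pmf (binomial_pmf (Suc n) q) (\<lambda>m. replicate_pmf m X)"
    using assms by (simp add: binomial_pmf_Suc bind_assoc_pmf bind_return_pmf)
  finally show ?case .
qed



lemma replicate_pmf_map: "replicate_pmf n (map_pmf g X) = map_pmf (map g) (replicate_pmf n X)"
  by (induction n) (simp_all add: map_pmf_def bind_assoc_pmf bind_return_pmf)

lemma cflag_gen: "t \<in> set_pmf (gen mu rho D h b) \<Longrightarrow> cflag t = b"
  by (cases h) auto

context
  fixes mu :: real and rho :: "nat \<Rightarrow> real" and D :: nat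
  assumes mu_pos: "mu > 0" and rho_range: "\<And>t. t \<in> {1..D} \<Longrightarrow> 0 \<le> rho t \<and> rho t \<le> 1"
begin

lemma shape_law: "h \<le> D \<Longrightarrow> map_pmf color_shape (gen mu rho D h b) = color_law mu rho D h"
proof (induction h arbitrary: b)
  case 0
  then show ?case by simp
next
  case (Suc h)
  define r where "r = rho (D - h)"
  have r: "0 \<le> r" "r \<le> 1" using rho_range[of "D - h"] Suc.prems by (auto simp: r_def)
  define C where "C = do { b' \<leftarrow> bernoulli_pmf r; gen mu rho D h b' }"
  define L where "L = color_law mu rho D h"
  have IH: "map_pmf color_shape (gen mu rho D h b') = L" for b' using Suc by (simp add: L_def)
  have C1: "map_pmf (\<lambda>c. (\<not> cflag c, color_shape c)) C = pair_pmf (bernoulli_pmf (1 - r)) L"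
  proof -
    have "map_pmf (\<lambda>c. (\<not> cflag c, color_shape c)) C
        = do { b' \<leftarrow> bernoulli_pmf r; map_pmf (\<lambda>c. (\<not> b', color_shape c)) (gen mu rho D h b') }"
      unfolding C_def map_bind_pmf by (intro bind_pmf_cong refl map_pmf_cong) (auto dest: cflag_gen)
    also have "\<dots> = do { b' \<leftarrow> bernoulli_pmf r; map_pmf (Pair (\<not> b')) L }"
    proof (intro bind_pmf_cong refl)
      fix b'
      have "map_pmf (\<lambda>c. (\<not> b', color_shape c)) (gen mu rho D h b')
          = map_pmf (Pair (\<not> b')) (map_pmf color_shape (gen mu rho D h b'))"
        by (simp add: pmf.map_comp o_def)
      then show "map_pmf (\<lambda>c. (\<not> b', color_shape c)) (gen mu rho D h b') = map_pmf (Pair (\<not> b')) L"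
        by (simp add: IH)
    qed
    also have "\<dots> = do { b \<leftarrow> map_pmf Not (bernoulli_pmf r); map_pmf (Pair b) L }"
      by (simp add: bind_map_pmf)
    also have "\<dots> = pair_pmf (bernoulli_pmf (1 - r)) L"
      using r by (subst map_not_bernoulli) (auto simp: pair_pmf_def map_pmf_def)
    finally show ?thesis .
  qed
  have eq: "\<And>xs. map snd (filter fst (map (\<lambda>c. (\<not> cflag c, color_shape c)) xs)) = map color_shape (filter (\<lambda>c. \<not> cflag c) xs)"
    by (induct_tac xs) auto
  have "map_pmf color_shape (gen mu rho D (Suc h) b)
      = do { n \<leftarrow> poisson_pmf mu;
             map_pmf (\<lambda>cs. UNode (map color_shape (filter (\<lambda>c. \<not> cflag c) cs))) (replicate_pmf n C) }"
    by (simp add: map_bind_pmf C_def r_def map_pmf_def[symmetric] pmf.map_comp o_def)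
  also have "\<dots> = do { n \<leftarrow> poisson_pmf mu;
             map_pmf (\<lambda>xs. UNode (map snd (filter fst xs)))
               (replicate_pmf n (map_pmf (\<lambda>c. (\<not> cflag c, color_shape c)) C)) }"
    unfolding replicate_pmf_map pmf.map_comp o_def eq by simp
  also have "\<dots> = do { n \<leftarrow> poisson_pmf mu;
             map_pmf UNode (bind_pmf (binomial_pmf n (1 - r)) (\<lambda>m. replicate_pmf m L)) }"
    unfolding C1 using r by (simp flip: list_thinning add: pmf.map_comp o_def)
  also have "\<dots> = do { m \<leftarrow> bind_pmf (poisson_pmf mu) (\<lambda>n. binomial_pmf n (1 - r));
             map_pmf UNode (replicate_pmf m L) }"
    by (simp add: bind_assoc_pmf map_bind_pmf)
  also have "\<dots> = color_law mu rho D (Suc h)"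
    using r mu_pos by (simp add: poisson_binomial L_def r_def map_pmf_def)
  finally show ?case .
qed

end


definition goodT :: "(nat \<Rightarrow> utree pmf) \<Rightarrow> ('a \<times> (nat \<times> utree) list) pmf \<Rightarrow> bool" where
  "goodT L J \<longleftrightarrow> (\<forall>(F :: 'a \<Rightarrow> (nat \<times> utree) list \<Rightarrow> ennreal) j d s.
     (\<integral>\<^sup>+x. F (fst x) (take j (snd x)) * indicator {r. j < length r \<and> r ! j = (d, s)} (snd x) \<partial>J)
   = ennreal (pmf (L d) s) *
     (\<integral>\<^sup>+x. F (fst x) (take j (snd x)) * indicator {r. j < length r \<and> fst (r ! j) = d} (snd x) \<partial>J))"

lemma goodTD:
  "goodT L J \<Longrightarrow>
     (\<integral>\<^sup>+x. F (fst x) (take j (snd x)) * indicator {r. j < length r \<and> r ! j = (d, s)} (snd x) \<partial>J)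
   = ennreal (pmf (L d) s) *
     (\<integral>\<^sup>+x. F (fst x) (take j (snd x)) * indicator {r. j < length r \<and> fst (r ! j) = d} (snd x) \<partial>J)"
  unfolding goodT_def by blast

lemma goodT_return: "goodT L (return_pmf (a, []))"
  unfolding goodT_def by simp

lemma goodT_bind:
  fixes K :: "'x \<Rightarrow> ('a \<times> (nat \<times> utree) list) pmf"
  assumes "\<And>x. x \<in> set_pmf N \<Longrightarrow> goodT L (K x)"
  shows "goodT L (bind_pmf N K)"
  unfolding goodT_def
proof (intro allI)
  fix F :: "'a \<Rightarrow> (nat \<times> utree) list \<Rightarrow> ennreal" and j d s
  have "(\<integral>\<^sup>+x. F (fst x) (take j (snd x)) * indicator {r. j < length r \<and> r ! j = (d, s)} (snd x) \<partial>bind_pmf N K)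
      = (\<integral>\<^sup>+y. (\<integral>\<^sup>+x. F (fst x) (take j (snd x)) * indicator {r. j < length r \<and> r ! j = (d, s)} (snd x) \<partial>K y) \<partial>N)"
    by simp
  also have "\<dots> = (\<integral>\<^sup>+y. ennreal (pmf (L d) s) *
     (\<integral>\<^sup>+x. F (fst x) (take j (snd x)) * indicator {r. j < length r \<and> fst (r ! j) = d} (snd x) \<partial>K y) \<partial>N)"
    by (intro nn_integral_cong_AE) (auto simp: AE_measure_pmf_iff intro!: goodTD assms)
  also have "\<dots> = ennreal (pmf (L d) s) * (\<integral>\<^sup>+y.
     (\<integral>\<^sup>+x. F (fst x) (take j (snd x)) * indicator {r. j < length r \<and> fst (r ! j) = d} (snd x) \<partial>K y) \<partial>N)"
    by (rule nn_integral_cmult) simp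
  finally show "(\<integral>\<^sup>+x. F (fst x) (take j (snd x)) * indicator {r. j < length r \<and> r ! j = (d, s)} (snd x) \<partial>bind_pmf N K)
      = ennreal (pmf (L d) s) * (\<integral>\<^sup>+x. F (fst x) (take j (snd x)) * indicator {r. j < length r \<and> fst (r ! j) = d} (snd x) \<partial>bind_pmf N K)"
    by simp
qed

lemma goodT_map_tag:
  fixes J :: "('a \<times> (nat \<times> utree) list) pmf" and g :: "'a \<Rightarrow> 'b"
  assumes "goodT L J"
  shows "goodT L (map_pmf (\<lambda>x. (g (fst x), snd x)) J)"
  unfolding goodT_def
proof (intro allI)
  fix F :: "'b \<Rightarrow> (nat \<times> utree) list \<Rightarrow> ennreal" and j d s
  show "(\<integral>\<^sup>+x. F (fst x) (take j (snd x)) * indicator {r. j < length r \<and> r ! j = (d, s)} (snd x) \<partial>map_pmf (\<lambda>x. (g (fst x), snd x)) J)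
      = ennreal (pmf (L d) s) * (\<integral>\<^sup>+x. F (fst x) (take j (snd x)) * indicator {r. j < length r \<and> fst (r ! j) = d} (snd x) \<partial>map_pmf (\<lambda>x. (g (fst x), snd x)) J)"
    using goodTD[OF assms, of "\<lambda>a. F (g a)" j d s] by simp
qed

lemma goodT_cons:
  fixes J :: "(utree \<times> (nat \<times> utree) list) pmf" and c :: 'b
  assumes G: "goodT L J" and M: "map_pmf fst J = L k"
  shows "goodT L (map_pmf (\<lambda>x. (c, (k, fst x) # snd x)) J)"
  unfolding goodT_def
proof (intro allI)
  fix F :: "'b \<Rightarrow> (nat \<times> utree) list \<Rightarrow> ennreal" and j d s
  show "(\<integral>\<^sup>+x. F (fst x) (take j (snd x)) * indicator {r. j < length r \<and> r ! j = (d, s)} (snd x) \<partial>map_pmf (\<lambda>x. (c, (k, fst x) # snd x)) J)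
      = ennreal (pmf (L d) s) * (\<integral>\<^sup>+x. F (fst x) (take j (snd x)) * indicator {r. j < length r \<and> fst (r ! j) = d} (snd x) \<partial>map_pmf (\<lambda>x. (c, (k, fst x) # snd x)) J)"
  proof (cases j)
    case 0
    have "(\<integral>\<^sup>+x. F c [] * indicator {r. 0 < length r \<and> r ! 0 = (d, s)} ((k, fst x) # snd x) \<partial>J)
        = (\<integral>\<^sup>+x. (F c [] * indicator {k} d) * indicator {x. fst x = s} x \<partial>J)"
      by (intro nn_integral_cong) (auto simp: indicator_def)
    also have "\<dots> = F c [] * indicator {k} d * emeasure J {x. fst x = s}"
      by (simp add: nn_integral_cmult_indicator)
    also have "emeasure J {x. fst x = s} = ennreal (pmf (L k) s)"
    proof -
      have "emeasure J {x. fst x = s} = emeasure (map_pmf fst J) {s}"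
        by (simp add: vimage_def)
      also have "\<dots> = ennreal (pmf (L k) s)" by (simp add: M emeasure_pmf_single)
      finally show ?thesis .
    qed
    also have "F c [] * indicator {k} d * ennreal (pmf (L k) s)
        = ennreal (pmf (L d) s) * (\<integral>\<^sup>+x. F c [] * indicator {r. 0 < length r \<and> fst (r ! 0) = d} ((k, fst x) # snd x) \<partial>J)"
      by (simp add: indicator_def mult.commute)
    finally show ?thesis using 0 by simp
  next
    case (Suc j')
    show ?thesis
      using goodTD[OF G, of "\<lambda>a pre. F c ((k, a) # pre)" j' d s] Suc
      by (simp add: indicator_def)
  qed
qed

lemma goodT_pair:
  fixes J1 :: "('a \<times> (nat \<times> utree) list) pmf" and J2 :: "('b \<times> (nat \<times> utree) list) pmf"
  assumes G1: "goodT L J1" and G2: "goodT L J2"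
  shows "goodT L (map_pmf (\<lambda>(x, y). ((fst x, fst y), snd x @ snd y)) (pair_pmf J1 J2))"
  unfolding goodT_def
proof (intro allI)
  fix F :: "'a \<times> 'b \<Rightarrow> (nat \<times> utree) list \<Rightarrow> ennreal" and j d s
  define P where "P = ennreal (pmf (L d) s)"
  define I1 where "I1 i r = (indicator {r. i < length r \<and> r ! i = (d, s)} r :: ennreal)" for i and r :: "(nat \<times> utree) list"
  define I2 where "I2 i r = (indicator {r. i < length r \<and> fst (r ! i) = d} r :: ennreal)" for i and r :: "(nat \<times> utree) list"
  define F1 where "F1 a pre = (\<integral>\<^sup>+y. F (a, fst y) pre \<partial>J2)" for a pre
  define B where "B x = (\<integral>\<^sup>+y. F (fst x, fst y) (snd x @ take (j - length (snd x)) (snd y))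
                         * I2 (j - length (snd x)) (snd y) \<partial>J2)" for x :: "'a \<times> (nat \<times> utree) list"
  define C where "C x = (indicator {x. length (snd x) \<le> j} x :: ennreal)" for x :: "'a \<times> (nat \<times> utree) list"
  have ta: "take j (a @ b) = a @ take (j - length a) b" if "length a \<le> j" for a b :: "(nat \<times> utree) list"
    using that by simp
  have in1: "(\<integral>\<^sup>+y. F (fst x, fst y) (take j (snd x @ snd y)) * I1 j (snd x @ snd y) \<partial>J2)
      = F1 (fst x) (take j (snd x)) * I1 j (snd x) + P * B x * C x" for x
  proof (cases "j < length (snd x)")
    case True
    then have "(\<integral>\<^sup>+y. F (fst x, fst y) (take j (snd x @ snd y)) * I1 j (snd x @ snd y) \<partial>J2)
        = (\<integral>\<^sup>+y. F (fst x, fst y) (take j (snd x)) * I1 j (snd x) \<partial>J2)"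
      by (intro nn_integral_cong) (simp add: I1_def nth_append indicator_def)
    also have "\<dots> = F1 (fst x) (take j (snd x)) * I1 j (snd x)"
      unfolding F1_def by (rule nn_integral_multc) simp
    finally show ?thesis using True by (simp add: C_def)
  next
    case False
    then have "(\<integral>\<^sup>+y. F (fst x, fst y) (take j (snd x @ snd y)) * I1 j (snd x @ snd y) \<partial>J2)
        = (\<integral>\<^sup>+y. F (fst x, fst y) (snd x @ take (j - length (snd x)) (snd y)) * I1 (j - length (snd x)) (snd y) \<partial>J2)"
      by (intro nn_integral_cong) (auto simp: I1_def nth_append indicator_def)
    also have "\<dots> = P * B x"
      using goodTD[OF G2, of "\<lambda>a pre. F (fst x, a) (snd x @ pre)" "j - length (snd x)" d s]
      by (simp add: P_def B_def I1_def I2_def)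
    finally show ?thesis using False by (simp add: C_def I1_def)
  qed
  have in2: "(\<integral>\<^sup>+y. F (fst x, fst y) (take j (snd x @ snd y)) * I2 j (snd x @ snd y) \<partial>J2)
      = F1 (fst x) (take j (snd x)) * I2 j (snd x) + B x * C x" for x
  proof (cases "j < length (snd x)")
    case True
    then have "(\<integral>\<^sup>+y. F (fst x, fst y) (take j (snd x @ snd y)) * I2 j (snd x @ snd y) \<partial>J2)
        = (\<integral>\<^sup>+y. F (fst x, fst y) (take j (snd x)) * I2 j (snd x) \<partial>J2)"
      by (intro nn_integral_cong) (simp add: I2_def nth_append indicator_def)
    also have "\<dots> = F1 (fst x) (take j (snd x)) * I2 j (snd x)"
      unfolding F1_def by (rule nn_integral_multc) simp
    finally show ?thesis using True by (simp add: C_def)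
  next
    case False
    then have "(\<integral>\<^sup>+y. F (fst x, fst y) (take j (snd x @ snd y)) * I2 j (snd x @ snd y) \<partial>J2)
        = B x"
      unfolding B_def by (intro nn_integral_cong) (auto simp: I2_def nth_append indicator_def)
    then show ?thesis using False by (simp add: C_def I2_def)
  qed
  have "(\<integral>\<^sup>+z. F (fst z) (take j (snd z)) * I1 j (snd z) \<partial>map_pmf (\<lambda>(x, y). ((fst x, fst y), snd x @ snd y)) (pair_pmf J1 J2))
      = (\<integral>\<^sup>+x. F1 (fst x) (take j (snd x)) * I1 j (snd x) + P * B x * C x \<partial>J1)"
    by (simp only: nn_integral_map_pmf nn_integral_pair_pmf' case_prod_beta fst_conv snd_conv in1)
  also have "\<dots> = (\<integral>\<^sup>+x. F1 (fst x) (take j (snd x)) * I1 j (snd x) \<partial>J1) + P * (\<integral>\<^sup>+x. B x * C x \<partial>J1)"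
    by (simp add: nn_integral_add nn_integral_cmult mult.assoc)
  also have "(\<integral>\<^sup>+x. F1 (fst x) (take j (snd x)) * I1 j (snd x) \<partial>J1)
      = P * (\<integral>\<^sup>+x. F1 (fst x) (take j (snd x)) * I2 j (snd x) \<partial>J1)"
    using goodTD[OF G1, of F1 j d s] by (simp add: P_def I1_def I2_def)
  also have "P * (\<integral>\<^sup>+x. F1 (fst x) (take j (snd x)) * I2 j (snd x) \<partial>J1) + P * (\<integral>\<^sup>+x. B x * C x \<partial>J1)
      = P * (\<integral>\<^sup>+x. F1 (fst x) (take j (snd x)) * I2 j (snd x) + B x * C x \<partial>J1)"
    by (simp add: nn_integral_add distrib_left)
  also have "(\<integral>\<^sup>+x. F1 (fst x) (take j (snd x)) * I2 j (snd x) + B x * C x \<partial>J1)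
      = (\<integral>\<^sup>+z. F (fst z) (take j (snd z)) * I2 j (snd z) \<partial>map_pmf (\<lambda>(x, y). ((fst x, fst y), snd x @ snd y)) (pair_pmf J1 J2))"
    by (simp only: nn_integral_map_pmf nn_integral_pair_pmf' case_prod_beta fst_conv snd_conv in2)
  finally show "(\<integral>\<^sup>+x. F (fst x) (take j (snd x)) * indicator {r. j < length r \<and> r ! j = (d, s)} (snd x) \<partial>map_pmf (\<lambda>(x, y). ((fst x, fst y), snd x @ snd y)) (pair_pmf J1 J2))
      = ennreal (pmf (L d) s) * (\<integral>\<^sup>+x. F (fst x) (take j (snd x)) * indicator {r. j < length r \<and> fst (r ! j) = d} (snd x) \<partial>map_pmf (\<lambda>(x, y). ((fst x, fst y), snd x @ snd y)) (pair_pmf J1 J2))"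
    by (simp add: P_def I1_def I2_def)
qed



lemma goodT_replicate:
  fixes J :: "('a \<times> (nat \<times> utree) list) pmf"
  assumes G: "goodT L J"
  shows "goodT L (map_pmf (\<lambda>xs. (map fst xs, concat (map snd xs))) (replicate_pmf n J))"
proof (induction n)
  case 0
  then show ?case by (simp add: goodT_return)
next
  case (Suc n)
  have "map_pmf (\<lambda>xs. (map fst xs, concat (map snd xs))) (replicate_pmf (Suc n) J)
      = map_pmf (\<lambda>x. (fst (fst x) # snd (fst x), snd x))
          (map_pmf (\<lambda>(x, y). ((fst x, fst y), snd x @ snd y))
            (pair_pmf J (map_pmf (\<lambda>xs. (map fst xs, concat (map snd xs))) (replicate_pmf n J))))"
    by (simp add: pair_pmf_def map_pmf_def bind_assoc_pmf bind_return_pmf)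
  then show ?case
    by (simp only:) (intro goodT_map_tag goodT_pair G Suc)
qed

definition colorsk :: "nat \<Rightarrow> ctree \<Rightarrow> (nat \<times> utree) list" where
  "colorsk k t = map (\<lambda>(d, u). (d, color_shape u)) (cnodes k t)"

fun innerc :: "nat \<Rightarrow> ctree \<Rightarrow> (nat \<times> utree) list" where
  "innerc k (CNode b cs) = concat (map (colorsk (Suc k)) cs)"

lemma colorsk_inner: "colorsk k t = (if cflag t then [(k, color_shape t)] else []) @ innerc k t"
  by (cases t) (simp add: colorsk_def[abs_def] map_concat o_def)

lemma colors_colorsk: "colors t = colorsk 0 t"
  by (simp add: colors_def colorsk_def)

definition LL :: "real \<Rightarrow> (nat \<Rightarrow> real) \<Rightarrow> nat \<Rightarrow> nat \<Rightarrow> utree pmf" where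
  "LL mu rho D d = color_law mu rho D (D - d)"

context
  fixes mu :: real and rho :: "nat \<Rightarrow> real" and D :: nat
  assumes mu_pos: "mu > 0" and rho_range: "\<And>t. t \<in> {1..D} \<Longrightarrow> 0 \<le> rho t \<and> rho t \<le> 1"
begin

lemma main_good:
  "h \<le> D \<Longrightarrow> goodT (LL mu rho D) (map_pmf (\<lambda>t. (color_shape t, innerc (D - h) t)) (gen mu rho D h b))"
proof (induction h arbitrary: b)
  case 0
  then show ?case by (simp add: goodT_return)
next
  case (Suc h)
  define r where "r = rho (D - h)"
  define C where "C = do { b' \<leftarrow> bernoulli_pmf r; gen mu rho D h b' }"
  define Y where "Y c = (if cflag c then None else Some (color_shape c), colorsk (D - h) c)" for c
  define g where "g os = UNode (concat (map (\<lambda>z. case z of None \<Rightarrow> [] | Some x \<Rightarrow> [x]) os))"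
    for os :: "utree option list"
  have Dh: "Suc (D - Suc h) = D - h" "D - (D - h) = h" using Suc.prems by auto
  have YC: "goodT (LL mu rho D) (map_pmf Y C)"
    unfolding C_def map_bind_pmf
  proof (intro goodT_bind)
    fix b'
    show "goodT (LL mu rho D) (map_pmf Y (gen mu rho D h b'))"
    proof (cases b')
      case True
      have "map_pmf Y (gen mu rho D h b') = map_pmf (\<lambda>x. (None, (D - h, fst x) # snd x))
               (map_pmf (\<lambda>t. (color_shape t, innerc (D - h) t)) (gen mu rho D h b'))"
        unfolding pmf.map_comp
        by (intro map_pmf_cong refl) (auto simp: Y_def o_def True colorsk_inner[of "D - h"] dest: cflag_gen)
      moreover have "map_pmf fst (map_pmf (\<lambda>t. (color_shape t, innerc (D - h) t)) (gen mu rho D h b')) = LL mu rho D (D - h)"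
        using shape_law[where h=h and b=b', OF mu_pos rho_range] Suc.prems by (simp add: pmf.map_comp o_def LL_def Dh)
      ultimately show ?thesis
        using Suc.IH[of b'] Suc.prems by (simp add: goodT_cons)
    next
      case False
      have "map_pmf Y (gen mu rho D h b') = map_pmf (\<lambda>x. (Some (fst x), snd x))
               (map_pmf (\<lambda>t. (color_shape t, innerc (D - h) t)) (gen mu rho D h b'))"
        unfolding pmf.map_comp
        by (intro map_pmf_cong refl) (auto simp: Y_def o_def False colorsk_inner[of "D - h"] dest: cflag_gen)
      then show ?thesis
        using Suc.IH[of b'] Suc.prems by (simp add: goodT_map_tag)
    qed
  qed
  have eqc: "\<And>cs. (UNode (map color_shape (filter (\<lambda>c. \<not> cflag c) cs)), concat (map (colorsk (D - h)) cs))
            = (g (map fst (map Y cs)), concat (map snd (map Y cs)))"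
  proof -
    fix cs show "(UNode (map color_shape (filter (\<lambda>c. \<not> cflag c) cs)), concat (map (colorsk (D - h)) cs))
            = (g (map fst (map Y cs)), concat (map snd (map Y cs)))"
      by (induction cs) (auto simp: g_def Y_def)
  qed
  have "map_pmf (\<lambda>t. (color_shape t, innerc (D - Suc h) t)) (gen mu rho D (Suc h) b)
      = do { n \<leftarrow> poisson_pmf mu;
             map_pmf (\<lambda>cs. (UNode (map color_shape (filter (\<lambda>c. \<not> cflag c) cs)), concat (map (colorsk (D - h)) cs)))
               (replicate_pmf n C) }"
    by (simp add: map_bind_pmf C_def r_def map_pmf_def[symmetric] pmf.map_comp o_def Dh)
  also have "\<dots> = do { n \<leftarrow> poisson_pmf mu;
             map_pmf (\<lambda>x. (g (fst x), snd x))
               (map_pmf (\<lambda>xs. (map fst xs, concat (map snd xs))) (replicate_pmf n (map_pmf Y C))) }"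
    unfolding eqc replicate_pmf_map pmf.map_comp o_def by simp
  finally show ?case
    by (simp only:) (intro goodT_bind goodT_map_tag goodT_replicate YC)
qed

lemma top_good:
  assumes "D \<ge> 1"
  shows "goodT (LL mu rho D) (map_pmf (\<lambda>t. ((), colors t)) (gen mu rho D D True))"
proof -
  have "map_pmf (\<lambda>t. ((), colors t)) (gen mu rho D D True) = map_pmf (\<lambda>x. ((), (0, fst x) # snd x))
           (map_pmf (\<lambda>t. (color_shape t, innerc (D - D) t)) (gen mu rho D D True))"
    unfolding pmf.map_comp
    by (intro map_pmf_cong refl) (auto simp: o_def colors_colorsk colorsk_inner[of 0] dest: cflag_gen)
  moreover have "map_pmf fst (map_pmf (\<lambda>t. (color_shape t, innerc (D - D) t)) (gen mu rho D D True)) = LL mu rho D 0"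
    using shape_law[where h=D and b=True, OF mu_pos rho_range] by (simp add: pmf.map_comp o_def LL_def)
  ultimately show ?thesis
    using main_good[of D True] by (simp add: goodT_cons)
qed

end


lemma nn_integral_poisson0:
  assumes "r \<ge> 0"
  shows "(\<integral>\<^sup>+n. of_nat n \<partial>poisson0 r) = ennreal r"
proof (cases "r = 0")
  case True then show ?thesis by (simp add: poisson0_def)
next
  case False
  then have r: "r > 0" using assms by simp
  define f where "f n = real n * (r ^ n / fact n * exp (- r))" for n
  have s0: "(\<lambda>i. (r * exp (-r)) * (r ^ i / fact i)) sums ((r * exp (-r)) * exp r)"
    by (rule sums_mult) (use exp_converges[of r] in \<open>simp add: divide_inverse mult.commute\<close>)
  have fS: "f (Suc i) = (r * exp (-r)) * (r ^ i / fact i)" for i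
  proof -
    have "real (Suc i) * (r ^ Suc i / fact (Suc i) * exp (- r)) = (real (Suc i) / real (Suc i)) * (r * exp (-r)) * (r ^ i / fact i)"
      by (simp only: fact_Suc of_nat_mult power_Suc) (simp add: field_simps del: of_nat_Suc)
    also have "real (Suc i) / real (Suc i) = 1" by (simp del: of_nat_Suc)
    finally show ?thesis by (simp add: f_def)
  qed
  have e1: "(r * exp (-r)) * exp r = r" by (simp add: mult.assoc flip: exp_add)
  have "(\<lambda>i. f (Suc i)) sums r" using s0 unfolding e1 fS .
  then have fs: "f sums r" by (subst (asm) sums_Suc_iff) (simp add: f_def)
  have "(\<integral>\<^sup>+n. of_nat n \<partial>poisson0 r) = (\<integral>\<^sup>+n. ennreal (f n) \<partial>count_space UNIV)"
    unfolding nn_integral_measure_pmf using r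
    by (intro nn_integral_cong) (simp add: poisson0_def f_def ennreal_of_nat_eq_real_of_nat flip: ennreal_mult)
  also have "\<dots> = (\<Sum>n. ennreal (f n))" by (simp add: nn_integral_count_space_nat)
  also have "\<dots> = ennreal r"
  proof -
    have fnn: "\<And>n. 0 \<le> f n" using r by (simp add: f_def)
    show ?thesis using fs r fnn by (intro sums_unique[symmetric]) (simp add: less_imp_le)
  qed
  finally show ?thesis .
qed

lemma nn_integral_replicate_sum:
  "(\<integral>\<^sup>+xs. sum_list (map \<phi> xs) \<partial>replicate_pmf n X) = of_nat n * (\<integral>\<^sup>+x. \<phi> x \<partial>X)"
proof (induction n)
  case 0 then show ?case by simp
next
  case (Suc n)
  have "(\<integral>\<^sup>+xs. sum_list (map \<phi> xs) \<partial>replicate_pmf (Suc n) X)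
      = (\<integral>\<^sup>+x. (\<integral>\<^sup>+xs. \<phi> x + sum_list (map \<phi> xs) \<partial>replicate_pmf n X) \<partial>X)"
    by simp
  also have "\<dots> = (\<integral>\<^sup>+x. \<phi> x + of_nat n * (\<integral>\<^sup>+x. \<phi> x \<partial>X) \<partial>X)"
    by (intro nn_integral_cong) (simp add: nn_integral_add Suc)
  also have "\<dots> = of_nat (Suc n) * (\<integral>\<^sup>+x. \<phi> x \<partial>X)"
    by (simp add: nn_integral_add algebra_simps)
  finally show ?case .
qed

context
  fixes mu :: real and rho :: "nat \<Rightarrow> real" and D :: nat
  assumes mu_pos: "mu > 0" and rho_range: "\<And>t. t \<in> {1..D} \<Longrightarrow> 0 \<le> rho t \<and> rho t \<le> 1"
begin

lemma leaves_nn: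
  "h \<le> D \<Longrightarrow> (\<integral>\<^sup>+u. of_nat (length (ulevel h u)) \<partial>color_law mu rho D h)
     = ennreal (\<Prod>i<h. mu * (1 - rho (D - i)))"
proof (induction h)
  case 0 then show ?case by simp
next
  case (Suc h)
  define r where "r = mu * (1 - rho (D - h))"
  have r: "r \<ge> 0" using rho_range[of "D - h"] Suc.prems mu_pos by (auto simp: r_def)
  have lc: "of_nat (length (concat (map (ulevel h) cs))) = (sum_list (map (\<lambda>c. of_nat (length (ulevel h c))) cs) :: ennreal)" for cs
    by (induction cs) auto
  have "(\<integral>\<^sup>+u. of_nat (length (ulevel (Suc h) u)) \<partial>color_law mu rho D (Suc h))
      = (\<integral>\<^sup>+n. of_nat n * ennreal (\<Prod>i<h. mu * (1 - rho (D - i))) \<partial>poisson0 r)"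
    using Suc by (simp add: r_def lc nn_integral_replicate_sum)
  also have "\<dots> = ennreal r * ennreal (\<Prod>i<h. mu * (1 - rho (D - i)))"
    using r by (simp add: nn_integral_multc nn_integral_poisson0)
  also have "\<dots> = ennreal (\<Prod>i<Suc h. mu * (1 - rho (D - i)))"
    using r by (simp add: r_def ennreal_mult'[symmetric] mult.commute)
  finally show ?case .
qed

lemma leaves_expect:
  assumes "d < D"
  shows "measure_pmf.expectation (color_law mu rho D (D - d)) (\<lambda>u. real (length (ulevel (D - d) u)))
       = mu ^ (D - d) * (\<Prod>s\<in>{d+1..D}. (1 - rho s))"
proof -
  have nn: "0 \<le> (\<Prod>i<D - d. mu * (1 - rho (D - i)))"
    using rho_range mu_pos by (intro prod_nonneg) (auto simp: less_imp_le)
  have "measure_pmf.expectation (color_law mu rho D (D - d)) (\<lambda>u. real (length (ulevel (D - d) u)))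
      = (\<Prod>i<D - d. mu * (1 - rho (D - i)))"
    using leaves_nn[of "D - d"] nn
    by (subst integral_eq_nn_integral) (auto simp: ennreal_of_nat_eq_real_of_nat[symmetric])
  also have "\<dots> = mu ^ (D - d) * (\<Prod>i<D - d. (1 - rho (D - i)))"
    by (simp add: prod.distrib)
  also have "(\<Prod>i<D - d. (1 - rho (D - i))) = (\<Prod>s\<in>{d+1..D}. (1 - rho s))"
  proof (rule prod.reindex_bij_witness[where i="\<lambda>s. D - s" and j="\<lambda>i. D - i"])
  qed (use assms in auto)
  finally show ?thesis .
qed

end


fun cbnd :: "nat \<Rightarrow> ctree \<Rightarrow> bool" where
  "cbnd 0 (CNode b cs) = (cs = [])"
| "cbnd (Suc h) (CNode b cs) = (\<forall>c\<in>set cs. cbnd h c)"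

lemma gen_bnd: "t \<in> set_pmf (gen mu rho D h b) \<Longrightarrow> cbnd h t"
proof (induction h arbitrary: t b)
  case 0 then show ?case by simp
next
  case (Suc h)
  then show ?case by (fastforce simp: set_replicate_pmf in_lists_conv_set)
qed

lemma shape_bnd: "cbnd h t \<Longrightarrow> uheight (color_shape t) \<le> h"
proof (induction h arbitrary: t)
  case 0 then show ?case by (cases t) simp
next
  case (Suc h)
  obtain b cs where t: "t = CNode b cs" by (cases t)
  show ?case using Suc unfolding t by (auto simp: Max_le_iff)
qed

lemma cnodes_bnd: "cbnd h t \<Longrightarrow> (d, u) \<in> set (cnodes k t) \<Longrightarrow> k \<le> d \<and> d - k \<le> h \<and> cbnd (h - (d - k)) u"
proof (induction h arbitrary: t k)
  case 0
  obtain b cs where t: "t = CNode b cs" by (cases t)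
  show ?case using 0 unfolding t by (auto split: if_splits)
next
  case (Suc h)
  obtain b cs where t: "t = CNode b cs" by (cases t)
  show ?case
  proof (cases "(d, u) = (k, t) \<and> b")
    case True then show ?thesis using Suc.prems by auto
  next
    case False
    then obtain c where c: "c \<in> set cs" "(d, u) \<in> set (cnodes (Suc k) c)"
      using Suc.prems unfolding t by (auto split: if_splits)
    have "cbnd h c" using Suc.prems c unfolding t by auto
    from Suc.IH[OF this c(2)] have "Suc k \<le> d \<and> d - Suc k \<le> h \<and> cbnd (h - (d - Suc k)) u" .
    moreover have "Suc h - (d - k) = h - (d - Suc k)" if "Suc k \<le> d" using that by simp
    ultimately show ?thesis by auto
  qed
qed

lemma cnodes_ge: "(d, u) \<in> set (cnodes k t) \<Longrightarrow> k \<le> d"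
proof (induction k t arbitrary: d u rule: cnodes.induct)
  case (1 k b cs)
  then show ?case by (auto split: if_splits dest: Suc_leD)
qed

lemma cnodes_count: "length (filter (\<lambda>x. fst x = k + e) (cnodes k t)) = length (filter cflag (level e t))"
proof (induction k t arbitrary: e rule: cnodes.induct)
  case (1 k b cs)
  show ?case
  proof (cases e)
    case 0
    have "filter (\<lambda>x. fst x = k) (concat (map (cnodes (Suc k)) cs)) = []"
      by (auto simp: filter_empty_conv dest: cnodes_ge)
    then show ?thesis using 0 by simp
  next
    case (Suc e')
    have "length (filter (\<lambda>x. fst x = k + e) (cnodes k (CNode b cs)))
        = sum_list (map (\<lambda>c. length (filter (\<lambda>x. fst x = Suc k + e') (cnodes (Suc k) c))) cs)"
      using Suc by (simp add: length_concat filter_concat o_def)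
    also have "\<dots> = sum_list (map (\<lambda>c. length (filter cflag (level e' c))) cs)"
      using 1 by (intro arg_cong[where f=sum_list] map_cong) auto
    also have "\<dots> = length (filter cflag (level e (CNode b cs)))"
      using Suc by (simp add: length_concat filter_concat o_def)
    finally show ?thesis .
  qed
qed

definition bm :: "real \<Rightarrow> (nat \<times> nat) pmf \<Rightarrow> bool" where
  "bm r J \<longleftrightarrow> (\<exists>N. J = bind_pmf N (\<lambda>m. map_pmf (\<lambda>bs. (m, length (filter id bs))) (replicate_pmf m (bernoulli_pmf r))))"

lemma bm_bind:
  assumes "\<And>x. x \<in> set_pmf M \<Longrightarrow> bm r (K x)"
  shows "bm r (bind_pmf M K)"
proof -
  define \<Phi> where "\<Phi> = (\<lambda>m. map_pmf (\<lambda>bs. (m, length (filter id bs))) (replicate_pmf m (bernoulli_pmf r)))"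
  have "\<forall>x\<in>set_pmf M. \<exists>N. K x = bind_pmf N \<Phi>" using assms by (auto simp: bm_def \<Phi>_def)
  then obtain N where N: "\<And>x. x \<in> set_pmf M \<Longrightarrow> K x = bind_pmf (N x) \<Phi>" by metis
  have "bind_pmf M K = bind_pmf (bind_pmf M N) \<Phi>"
    by (simp add: bind_assoc_pmf N cong: bind_pmf_cong)
  then show ?thesis unfolding bm_def \<Phi>_def by blast
qed

lemma bm_return: "bm r (return_pmf (0, 0))"
  unfolding bm_def by (rule exI[of _ "return_pmf 0"]) (simp add: bind_return_pmf)

lemma bm_sum:
  assumes "bm r J1" "bm r J2"
  shows "bm r (map_pmf (\<lambda>(x, y). (fst x + fst y, snd x + snd y)) (pair_pmf J1 J2))"
proof -
  define \<Phi> where "\<Phi> = (\<lambda>m. map_pmf (\<lambda>bs. (m, length (filter id bs))) (replicate_pmf m (bernoulli_pmf r)))"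
  obtain N1 N2 where J: "J1 = bind_pmf N1 \<Phi>" "J2 = bind_pmf N2 \<Phi>" using assms by (auto simp: bm_def \<Phi>_def)
  have "map_pmf (\<lambda>(x, y). (fst x + fst y, snd x + snd y)) (pair_pmf J1 J2)
      = do { m1 \<leftarrow> N1; m2 \<leftarrow> N2; bs1 \<leftarrow> replicate_pmf m1 (bernoulli_pmf r); bs2 \<leftarrow> replicate_pmf m2 (bernoulli_pmf r);
             return_pmf (m1 + m2, length (filter id (bs1 @ bs2))) }"
    unfolding J \<Phi>_def pair_pmf_def map_pmf_def bind_assoc_pmf bind_return_pmf
    by (subst bind_commute_pmf[where A = "replicate_pmf _ _"]) simp
  also have "\<dots> = do { m1 \<leftarrow> N1; m2 \<leftarrow> N2; \<Phi> (m1 + m2) }"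
    by (simp add: \<Phi>_def replicate_pmf_distrib map_pmf_def bind_assoc_pmf bind_return_pmf)
  also have "\<dots> = bind_pmf (map_pmf (\<lambda>(a, b). a + b) (pair_pmf N1 N2)) \<Phi>"
    by (simp add: pair_pmf_def map_pmf_def bind_assoc_pmf bind_return_pmf)
  finally show ?thesis unfolding bm_def \<Phi>_def by blast
qed

lemma bm_replicate:
  assumes "bm r J"
  shows "bm r (map_pmf (\<lambda>xs. (sum_list (map fst xs), sum_list (map snd xs))) (replicate_pmf n J))"
proof (induction n)
  case 0 then show ?case by (simp add: bm_return)
next
  case (Suc n)
  have "map_pmf (\<lambda>xs. (sum_list (map fst xs), sum_list (map snd xs))) (replicate_pmf (Suc n) J)
      = map_pmf (\<lambda>(x, y). (fst x + fst y, snd x + snd y))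
          (pair_pmf J (map_pmf (\<lambda>xs. (sum_list (map fst xs), sum_list (map snd xs))) (replicate_pmf n J)))"
    by (simp add: pair_pmf_def map_pmf_def bind_assoc_pmf bind_return_pmf)
  then show ?case using bm_sum[OF assms Suc] by simp
qed

lemma concat_level0[simp]: "concat (map (level 0) cs) = cs"
  by (induction cs) auto

definition ZX :: "nat \<Rightarrow> ctree \<Rightarrow> nat \<times> nat" where
  "ZX e t = (length (level e t), length (filter cflag (level e t)))"

lemma bm_gen:
  "1 \<le> e \<Longrightarrow> e \<le> h \<Longrightarrow> h \<le> D \<Longrightarrow> bm (rho (D - h + e)) (map_pmf (ZX e) (gen mu rho D h b))"
proof (induction h arbitrary: e b)
  case 0 then show ?case by simp
next
  case (Suc h)
  define C where "C = do { b' \<leftarrow> bernoulli_pmf (rho (D - h)); gen mu rho D h b' }"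
  have gS: "map_pmf (ZX e) (gen mu rho D (Suc h) b) = bind_pmf (poisson_pmf mu) (\<lambda>n. map_pmf (\<lambda>cs. ZX e (CNode b cs)) (replicate_pmf n C))"
    by (simp add: map_bind_pmf C_def map_pmf_def[symmetric] pmf.map_comp o_def)
  show ?case
  proof (cases "e = 1")
    case True
    have cm: "map_pmf cflag C = bernoulli_pmf (rho (D - h))"
    proof -
      have "map_pmf cflag C = bind_pmf (bernoulli_pmf (rho (D - h))) (\<lambda>b'. map_pmf cflag (gen mu rho D h b'))"
        by (simp add: C_def map_bind_pmf)
      also have "\<dots> = bind_pmf (bernoulli_pmf (rho (D - h))) return_pmf"
      proof (intro bind_pmf_cong refl)
        fix b' have "map_pmf cflag (gen mu rho D h b') = map_pmf (\<lambda>_. b') (gen mu rho D h b')"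
          by (intro map_pmf_cong refl) (simp add: cflag_gen)
        then show "map_pmf cflag (gen mu rho D h b') = return_pmf b'" by simp
      qed
      finally show ?thesis by (simp add: bind_return_pmf')
    qed
    have "map_pmf (\<lambda>cs. ZX e (CNode b cs)) (replicate_pmf n C)
        = map_pmf (\<lambda>bs. (n, length (filter id bs))) (replicate_pmf n (bernoulli_pmf (rho (D - h))))" for n
    proof -
      have "map_pmf (\<lambda>cs. ZX e (CNode b cs)) (replicate_pmf n C)
          = map_pmf (\<lambda>bs. (length bs, length (filter id bs))) (replicate_pmf n (map_pmf cflag C))"
        using True by (simp add: replicate_pmf_map pmf.map_comp o_def ZX_def filter_map)
      also have "\<dots> = map_pmf (\<lambda>bs. (n, length (filter id bs))) (replicate_pmf n (bernoulli_pmf (rho (D - h))))"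
        unfolding cm by (intro map_pmf_cong refl) (simp add: set_replicate_pmf)
      finally show ?thesis .
    qed
    moreover have "bm (rho (D - h)) (map_pmf (\<lambda>bs. (n, length (filter id bs))) (replicate_pmf n (bernoulli_pmf (rho (D - h)))))" for n
      unfolding bm_def by (rule exI[of _ "return_pmf n"]) (simp add: bind_return_pmf)
    moreover have "D - Suc h + e = D - h" using True Suc.prems by simp
    ultimately show ?thesis unfolding gS by (simp add: bm_bind)
  next
    case False
    then obtain e' where e: "e = Suc e'" "1 \<le> e'" "e' \<le> h" using Suc.prems by (cases e) auto
    have idx: "D - Suc h + e = D - h + e'" using e Suc.prems by simp
    have "map_pmf (\<lambda>cs. ZX e (CNode b cs)) (replicate_pmf n C)
        = map_pmf (\<lambda>xs. (sum_list (map fst xs), sum_list (map snd xs))) (replicate_pmf n (map_pmf (ZX e') C))" for n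
      using e by (simp add: replicate_pmf_map pmf.map_comp o_def ZX_def length_concat filter_concat)
    moreover have "bm (rho (D - h + e')) (map_pmf (ZX e') C)"
      unfolding C_def map_bind_pmf using Suc.IH[of e'] e Suc.prems by (intro bm_bind) auto
    ultimately show ?thesis unfolding gS idx by (simp add: bm_bind bm_replicate)
  qed
qed



lemma meas_cond:
  assumes "set_pmf p \<inter> s \<noteq> {}"
  shows "measure_pmf.prob (cond_pmf p s) A = measure_pmf.prob p (s \<inter> A) / measure_pmf.prob p s"
proof -
  have "measure_pmf (cond_pmf p s) = uniform_measure (measure_pmf p) s"
    using assms by (rule cond_pmf.rep_eq)
  moreover have "emeasure (measure_pmf p) s \<noteq> 0"
    using assms by (simp add: emeasure_measure_pmf_not_zero)
  ultimately show ?thesis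
    by (simp add: measure_pmf.emeasure_finite)
qed

lemma law_Q:
  fixes T :: "'t pmf" and cl :: "'t \<Rightarrow> (nat \<times> utree) list"
  assumes G: "goodT L (map_pmf (\<lambda>t. ((), cl t)) T)"
  shows "measure_pmf.prob T {t. j < length (cl t) \<and> take j (cl t) \<in> Q \<and> cl t ! j = (d, s)}
       = pmf (L d) s * measure_pmf.prob T {t. j < length (cl t) \<and> take j (cl t) \<in> Q \<and> fst (cl t ! j) = d}"
proof -
  have i1: "\<And>t. indicator Q (take j (cl t)) * indicator {r. j < length r \<and> r ! j = (d, s)} (cl t)
      = (indicator {t. j < length (cl t) \<and> take j (cl t) \<in> Q \<and> cl t ! j = (d, s)} t :: ennreal)"
    by (simp add: indicator_def)
  have i2: "\<And>t. indicator Q (take j (cl t)) * indicator {r. j < length r \<and> fst (r ! j) = d} (cl t)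
      = (indicator {t. j < length (cl t) \<and> take j (cl t) \<in> Q \<and> fst (cl t ! j) = d} t :: ennreal)"
    by (simp add: indicator_def)
  have "emeasure T {t. j < length (cl t) \<and> take j (cl t) \<in> Q \<and> cl t ! j = (d, s)}
      = ennreal (pmf (L d) s) * emeasure T {t. j < length (cl t) \<and> take j (cl t) \<in> Q \<and> fst (cl t ! j) = d}"
    using goodTD[OF G, of "\<lambda>_ pre. indicator Q pre" j d s] by (simp add: i1 i2)
  then show ?thesis
    by (simp add: measure_pmf.emeasure_eq_measure ennreal_mult[symmetric])
qed

lemma law_cond:
  fixes T :: "'t pmf" and cl :: "'t \<Rightarrow> (nat \<times> utree) list"
  assumes G: "goodT L (map_pmf (\<lambda>t. ((), cl t)) T)"
    and E: "E = {t. j < length (cl t) \<and> take j (cl t) \<in> Q \<and> fst (cl t ! j) = d}"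
    and ne: "set_pmf T \<inter> E \<noteq> {}"
  shows "map_pmf (\<lambda>t. snd (cl t ! j)) (cond_pmf T E) = L d"
proof (rule pmf_eqI)
  fix s
  have pos: "measure_pmf.prob T E \<noteq> 0" using ne measure_pmf_posI by fastforce
  have "E \<inter> (\<lambda>t. snd (cl t ! j)) -` {s} = {t. j < length (cl t) \<and> take j (cl t) \<in> Q \<and> cl t ! j = (d, s)}"
    unfolding E by (auto simp: prod_eq_iff)
  then have "pmf (map_pmf (\<lambda>t. snd (cl t ! j)) (cond_pmf T E)) s
      = measure_pmf.prob T {t. j < length (cl t) \<and> take j (cl t) \<in> Q \<and> cl t ! j = (d, s)} / measure_pmf.prob T E"
    by (simp add: pmf_map meas_cond[OF ne])
  also have "\<dots> = pmf (L d) s"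
    using law_Q[OF G, of j Q d s] pos unfolding E by simp
  finally show "pmf (map_pmf (\<lambda>t. snd (cl t ! j)) (cond_pmf T E)) s = pmf (L d) s" .
qed

lemma filter_colors_len:
  "length (filter (\<lambda>(d, s). d = D) (map (\<lambda>(d, u). (d, color_shape u)) xs)) = length (filter (\<lambda>x. fst x = D) xs)"
  by (induction xs) auto

lemma pmf_bm_joint:
  assumes "J = bind_pmf N (\<lambda>m. map_pmf (\<lambda>bs. (m, length (filter id bs))) (replicate_pmf m (bernoulli_pmf r)))"
    and r: "0 \<le> r" "r \<le> 1"
  shows "map_pmf fst J = N" and "pmf J (m, z) = pmf N m * pmf (binomial_pmf m r) z"
proof -
  show "map_pmf fst J = N"
    unfolding assms map_bind_pmf by (simp add: pmf.map_comp o_def bind_return_pmf')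
  have B: "map_pmf (\<lambda>bs. length (filter id bs)) (replicate_pmf m' (bernoulli_pmf r)) = binomial_pmf m' r" for m'
    using binomial_pmf_altdef[of r m'] r by (simp add: o_def)
  have P: "ennreal (pmf (map_pmf (\<lambda>bs. (m', length (filter id bs))) (replicate_pmf m' (bernoulli_pmf r))) (m, z))
      = ennreal (pmf (binomial_pmf m r) z) * indicator {m} m'" for m'
  proof -
    have "map_pmf (\<lambda>bs. (m', length (filter id bs))) (replicate_pmf m' (bernoulli_pmf r))
        = map_pmf (Pair m') (binomial_pmf m' r)"
      by (simp flip: B add: pmf.map_comp o_def)
    moreover have "pmf (map_pmf (Pair m') X) (m, z) = (if m' = m then pmf X z else 0)" for X :: "nat pmf"
    proof (cases "m' = m")
      case True then show ?thesis by (simp add: pmf_map_inj' inj_on_def)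
    next
      case False then show ?thesis by (auto simp: pmf_eq_0_set_pmf)
    qed
    ultimately show ?thesis by (simp add: indicator_def)
  qed
  have "ennreal (pmf J (m, z)) = (\<integral>\<^sup>+m'. ennreal (pmf (binomial_pmf m r) z) * indicator {m} m' \<partial>N)"
    unfolding assms ennreal_pmf_bind P ..
  also have "\<dots> = ennreal (pmf (binomial_pmf m r) z) * emeasure N {m}"
    by (simp add: nn_integral_cmult_indicator)
  also have "\<dots> = ennreal (pmf N m * pmf (binomial_pmf m r) z)"
    by (simp add: emeasure_pmf_single ennreal_mult[symmetric] mult.commute)
  finally show "pmf J (m, z) = pmf N m * pmf (binomial_pmf m r) z"
    by simp
qed

theorem proposition11p1:
  fixes mu :: real and D :: nat and rho :: "nat \<Rightarrow> real"
  assumes mu_pos: "mu > 0" and D_ge: "D \<ge> 1"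
    and rho_range: "\<And>t. t \<in> {1..D} \<Longrightarrow> 0 \<le> rho t \<and> rho t \<le> 1"
    and rho1: "rho 1 = 1"
  defines "T \<equiv> colored_gw mu rho D"
  shows
    \<comment> \<open>(a)\<close>
    "(\<forall>d \<in> {1..D}. \<forall>m.
        set_pmf T \<inter> {t. xi d t = m} \<noteq> {} \<longrightarrow>
        map_pmf (zeta d) (cond_pmf T {t. xi d t = m}) = binomial_pmf m (rho d))
     \<comment> \<open>(b) depth bound of colour subtrees\<close>
   \<and> (\<forall>t \<in> set_pmf T. \<forall>(d, s) \<in> set (colors t). uheight s \<le> D - d)
     \<comment> \<open>(b) law and (sequential) independence of colour subtrees\<close>
   \<and> (\<forall>j d p. set_pmf T \<inter> {t. j < length (colors t) \<and> take j (colors t) = p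
                                 \<and> fst (colors t ! j) = d} \<noteq> {} \<longrightarrow>
        map_pmf (\<lambda>t. snd (colors t ! j))
          (cond_pmf T {t. j < length (colors t) \<and> take j (colors t) = p
                          \<and> fst (colors t ! j) = d})
        = color_law mu rho D (D - d))
     \<comment> \<open>(c) mean number of same-colour leaves for colours created at depth d < D\<close>
   \<and> (\<forall>j d. d < D \<longrightarrow> set_pmf T \<inter> {t. j < length (colors t) \<and> fst (colors t ! j) = d} \<noteq> {} \<longrightarrow>
        measure_pmf.expectation
          (cond_pmf T {t. j < length (colors t) \<and> fst (colors t ! j) = d})
          (\<lambda>t. real (length (ulevel (D - d) (snd (colors t ! j)))))
        = mu ^ (D - d) * (\<Prod>s\<in>{d+1..D}. (1 - rho s)))
     \<comment> \<open>(c) colours created at depth D: \<zeta>_D of them, each with exactly one leaf\<close>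
   \<and> (\<forall>t \<in> set_pmf T.
        length (filter (\<lambda>(d, s). d = D) (colors t)) = zeta D t
      \<and> (\<forall>(d, s) \<in> set (colors t). d = D \<longrightarrow> length (ulevel 0 s) = 1 \<and> s = UNode []))"
proof -
  have rr: "\<And>t. t \<in> {1..D} \<Longrightarrow> 0 \<le> rho t \<and> rho t \<le> 1" by (rule rho_range)
  have TG: "T = gen mu rho D D True" unfolding T_def colored_gw_def ..
  have good: "goodT (LL mu rho D) (map_pmf (\<lambda>t. ((), colors t)) T)"
    unfolding TG by (rule top_good[OF mu_pos rr D_ge])
  have LLe: "LL mu rho D d = color_law mu rho D (D - d)" for d
    by (simp add: LL_def)
  have A: "\<forall>d \<in> {1..D}. \<forall>m.
        set_pmf T \<inter> {t. xi d t = m} \<noteq> {} \<longrightarrow>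
        map_pmf (zeta d) (cond_pmf T {t. xi d t = m}) = binomial_pmf m (rho d)"
  proof (intro ballI allI impI)
    fix d m assume d: "d \<in> {1..D}" and ne: "set_pmf T \<inter> {t. xi d t = m} \<noteq> {}"
    have r: "0 \<le> rho d" "rho d \<le> 1" using rho_range[OF d] by auto
    have "bm (rho (D - D + d)) (map_pmf (ZX d) (gen mu rho D D True))"
      using d by (intro bm_gen) auto
    then have "bm (rho d) (map_pmf (ZX d) T)" by (simp add: TG)
    then obtain N where N: "map_pmf (ZX d) T = bind_pmf N (\<lambda>m. map_pmf (\<lambda>bs. (m, length (filter id bs))) (replicate_pmf m (bernoulli_pmf (rho d))))"
      unfolding bm_def by blast
    obtain t0 where t0: "t0 \<in> set_pmf T" "t0 \<in> {t. xi d t = m}" using ne by blast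
    have pos: "measure_pmf.prob T {t. xi d t = m} \<noteq> 0" using measure_pmf_posI[OF t0] by simp
    have mN: "measure_pmf.prob T {t. xi d t = m} = pmf N m"
    proof -
      have "pmf N m = pmf (map_pmf fst (map_pmf (ZX d) T)) m"
        using pmf_bm_joint(1)[OF N r] by simp
      also have "\<dots> = measure_pmf.prob T {t. xi d t = m}"
        by (simp add: pmf_map pmf.map_comp vimage_def ZX_def xi_def)
      finally show ?thesis by simp
    qed
    show "map_pmf (zeta d) (cond_pmf T {t. xi d t = m}) = binomial_pmf m (rho d)"
    proof (rule pmf_eqI)
      fix z
      have "pmf (map_pmf (zeta d) (cond_pmf T {t. xi d t = m})) z
          = measure_pmf.prob T {t. xi d t = m \<and> zeta d t = z} / measure_pmf.prob T {t. xi d t = m}"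
        by (simp add: pmf_map meas_cond[OF ne] vimage_def Collect_conj_eq)
      also have "measure_pmf.prob T {t. xi d t = m \<and> zeta d t = z} = pmf (map_pmf (ZX d) T) (m, z)"
        by (simp add: pmf_map vimage_def ZX_def xi_def zeta_def)
      also have "\<dots> = pmf N m * pmf (binomial_pmf m (rho d)) z"
        using pmf_bm_joint(2)[OF N r] .
      finally show "pmf (map_pmf (zeta d) (cond_pmf T {t. xi d t = m})) z = pmf (binomial_pmf m (rho d)) z"
        using pos mN by simp
    qed
  qed
  have B1: "\<forall>t \<in> set_pmf T. \<forall>(d, s) \<in> set (colors t). uheight s \<le> D - d"
  proof (intro ballI, clarify)
    fix t d s assume t: "t \<in> set_pmf T" and ds: "(d, s) \<in> set (colors t)"
    obtain u where u: "(d, u) \<in> set (cnodes 0 t)" "s = color_shape u"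
      using ds by (auto simp: colors_def)
    have "cbnd D t" using t gen_bnd unfolding TG by blast
    from cnodes_bnd[OF this u(1)] have "cbnd (D - d) u" by simp
    then show "uheight s \<le> D - d" using shape_bnd u(2) by blast
  qed
  have B2: "\<forall>j d p. set_pmf T \<inter> {t. j < length (colors t) \<and> take j (colors t) = p
                                 \<and> fst (colors t ! j) = d} \<noteq> {} \<longrightarrow>
        map_pmf (\<lambda>t. snd (colors t ! j))
          (cond_pmf T {t. j < length (colors t) \<and> take j (colors t) = p
                          \<and> fst (colors t ! j) = d})
        = color_law mu rho D (D - d)"
  proof (intro allI impI)
    fix j d p
    assume ne: "set_pmf T \<inter> {t. j < length (colors t) \<and> take j (colors t) = p \<and> fst (colors t ! j) = d} \<noteq> {}"
    have E: "{t. j < length (colors t) \<and> take j (colors t) = p \<and> fst (colors t ! j) = d}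
        = {t. j < length (colors t) \<and> take j (colors t) \<in> {p} \<and> fst (colors t ! j) = d}" by simp
    show "map_pmf (\<lambda>t. snd (colors t ! j))
          (cond_pmf T {t. j < length (colors t) \<and> take j (colors t) = p \<and> fst (colors t ! j) = d})
        = color_law mu rho D (D - d)"
      using law_cond[OF good E ne] by (simp add: LLe)
  qed
  have C1: "\<forall>j d. d < D \<longrightarrow> set_pmf T \<inter> {t. j < length (colors t) \<and> fst (colors t ! j) = d} \<noteq> {} \<longrightarrow>
        measure_pmf.expectation
          (cond_pmf T {t. j < length (colors t) \<and> fst (colors t ! j) = d})
          (\<lambda>t. real (length (ulevel (D - d) (snd (colors t ! j)))))
        = mu ^ (D - d) * (\<Prod>s\<in>{d+1..D}. (1 - rho s))"
  proof (intro allI impI)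
    fix j d assume dD: "d < D"
      and ne: "set_pmf T \<inter> {t. j < length (colors t) \<and> fst (colors t ! j) = d} \<noteq> {}"
    have E: "{t. j < length (colors t) \<and> fst (colors t ! j) = d}
        = {t. j < length (colors t) \<and> take j (colors t) \<in> UNIV \<and> fst (colors t ! j) = d}" by simp
    have M: "map_pmf (\<lambda>t. snd (colors t ! j)) (cond_pmf T {t. j < length (colors t) \<and> fst (colors t ! j) = d})
        = color_law mu rho D (D - d)"
      using law_cond[OF good E ne] by (simp add: LLe)
    have "measure_pmf.expectation
          (cond_pmf T {t. j < length (colors t) \<and> fst (colors t ! j) = d})
          (\<lambda>t. real (length (ulevel (D - d) (snd (colors t ! j)))))
        = measure_pmf.expectation (map_pmf (\<lambda>t. snd (colors t ! j)) (cond_pmf T {t. j < length (colors t) \<and> fst (colors t ! j) = d}))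
            (\<lambda>u. real (length (ulevel (D - d) u)))"
      by simp
    also have "\<dots> = mu ^ (D - d) * (\<Prod>s\<in>{d+1..D}. (1 - rho s))"
      unfolding M by (rule leaves_expect[OF mu_pos rr dD])
    finally show "measure_pmf.expectation
          (cond_pmf T {t. j < length (colors t) \<and> fst (colors t ! j) = d})
          (\<lambda>t. real (length (ulevel (D - d) (snd (colors t ! j)))))
        = mu ^ (D - d) * (\<Prod>s\<in>{d+1..D}. (1 - rho s))" .
  qed
  have C2: "\<forall>t \<in> set_pmf T.
        length (filter (\<lambda>(d, s). d = D) (colors t)) = zeta D t
      \<and> (\<forall>(d, s) \<in> set (colors t). d = D \<longrightarrow> length (ulevel 0 s) = 1 \<and> s = UNode [])"
  proof (rule ballI, rule conjI)
    fix t assume t: "t \<in> set_pmf T"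
    show "length (filter (\<lambda>(d, s). d = D) (colors t)) = zeta D t"
      using cnodes_count[of 0 D t] unfolding colors_def filter_colors_len zeta_def by simp
    show "\<forall>(d, s) \<in> set (colors t). d = D \<longrightarrow> length (ulevel 0 s) = 1 \<and> s = UNode []"
    proof (rule ballI)
      fix x assume x: "x \<in> set (colors t)"
      obtain d s where xds: "x = (d, s)" by (cases x)
      show "case x of (d, s) \<Rightarrow> d = D \<longrightarrow> length (ulevel 0 s) = 1 \<and> s = UNode []"
      unfolding xds prod.case
      proof (intro impI)
      assume dD: "d = D"
      have ds: "(d, s) \<in> set (colors t)" using x xds by simp
      obtain u where u: "(d, u) \<in> set (cnodes 0 t)" "s = color_shape u"
        using ds by (auto simp: colors_def)
      have "cbnd D t" using t gen_bnd unfolding TG by blast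
      from cnodes_bnd[OF this u(1)] dD have "cbnd 0 u" by simp
      then have "s = UNode []" using u(2) by (cases u) simp
      then show "length (ulevel 0 s) = 1 \<and> s = UNode []" by simp
      qed
    qed
  qed
  show ?thesis by (rule conjI[OF A conjI[OF B1 conjI[OF B2 conjI[OF C1 C2]]]])
qed


end
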